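(* Let $A$ be a positively graded, graded-commutative DG algebra with $A\not\simeq 0$ and $s=\operatorname{amp}(H(A))<\infty$. Let $L$ be a non-zero semifree DG $A$-module with a semibasis $B$ concentrated in degrees $n,n+1,\ldots,n+m$, where $n,m\in\mathbb{Z}$ and $m\geq 0$. Then $\inf(H(L))\geq n$ and $\sup(H(L))\leq s+n+m$, so $\operatorname{amp}(H(L))\leq s+m$.
   Context: Complexes are indexed homologically. A DG algebra is a complex $A$ with a unital, associative, graded-commutative chain map multiplication $A\otimes A\to A$; it is positively graded if $A_i=0$ for $i<0$. For a complex $X$, $\sup(X)=\sup\{i: X_i\neq 0\}$, $\inf(X)=\inf\{i: X_i\neq0\}$, $\operatorname{amp}(X)=\sup(X)-\inf(X)$; these are applied to the homology $H(X)$. A DG $A$-module $X$ with $\inf(X)>-\infty$ is semifree if its underlying graded module is free over the underlying graded algebra $A^\natural=\bigoplus_i A_i$; a semibasis is a set of homogeneous elements forming a basis of this free module. $A\not\simeq0$ means $H(A)\neq0$. *)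

theory Defs
  imports Main "HOL-Library.Extended_Real"
begin

text \<open>A graded abelian group is represented internally: a type 'a of class
ab_group_add (the total object X = direct sum of its components) together with a family
G :: int => 'a set of homogeneous components such that 'a is their internal direct sum.
Complexes are indexed homologically. The ground ring plays no role and is taken to be Z.\<close>

definition graded_group :: "(int \<Rightarrow> 'a::ab_group_add set) \<Rightarrow> bool" where
  "graded_group G \<longleftrightarrow>
     (\<forall>i. 0 \<in> G i \<and> (\<forall>x\<in>G i. \<forall>y\<in>G i. x + y \<in> G i \<and> - x \<in> G i)) \<and>
     (\<forall>x. \<exists>I f. finite I \<and> (\<forall>i\<in>I. f i \<in> G i) \<and> x = sum f I) \<and>
     (\<forall>I f. finite I \<and> (\<forall>i\<in>I. f i \<in> G i) \<and> sum f I = 0 \<longrightarrow> (\<forall>i\<in>I. f i = 0))"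

definition ksign :: "int \<Rightarrow> 'a::group_add \<Rightarrow> 'a" where
  "ksign i x = (if even i then x else - x)"

definition is_complex :: "(int \<Rightarrow> 'a::ab_group_add set) \<Rightarrow> ('a \<Rightarrow> 'a) \<Rightarrow> bool" where
  "is_complex G d \<longleftrightarrow> graded_group G \<and>
     (\<forall>x y. d (x + y) = d x + d y) \<and>
     (\<forall>i. \<forall>x\<in>G i. d x \<in> G (i - 1)) \<and>
     (\<forall>x. d (d x) = 0)"

definition dg_algebra :: "(int \<Rightarrow> 'a::{ring, monoid_mult} set) \<Rightarrow> ('a \<Rightarrow> 'a) \<Rightarrow> bool" where
  "dg_algebra GA dA \<longleftrightarrow> is_complex GA dA \<and>
     1 \<in> GA 0 \<and>
     (\<forall>i j. \<forall>a\<in>GA i. \<forall>b\<in>GA j. a * b \<in> GA (i + j)) \<and>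
     (\<forall>i. \<forall>a\<in>GA i. \<forall>b. dA (a * b) = dA a * b + ksign i (a * dA b)) \<and>
     (\<forall>i j. \<forall>a\<in>GA i. \<forall>b\<in>GA j. a * b = ksign (i * j) (b * a))"

definition positively_graded :: "(int \<Rightarrow> 'a::zero set) \<Rightarrow> bool" where
  "positively_graded G \<longleftrightarrow> (\<forall>i<0. G i = {0})"

definition dg_module ::
  "(int \<Rightarrow> 'a::{ring, monoid_mult} set) \<Rightarrow> ('a \<Rightarrow> 'a) \<Rightarrow>
   (int \<Rightarrow> 'm::ab_group_add set) \<Rightarrow> ('m \<Rightarrow> 'm) \<Rightarrow> ('a \<Rightarrow> 'm \<Rightarrow> 'm) \<Rightarrow> bool" where
  "dg_module GA dA GL dL sm \<longleftrightarrow> dg_algebra GA dA \<and> is_complex GL dL \<and>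
     (\<forall>a x y. sm a (x + y) = sm a x + sm a y) \<and>
     (\<forall>a b x. sm (a + b) x = sm a x + sm b x) \<and>
     (\<forall>a b x. sm (a * b) x = sm a (sm b x)) \<and>
     (\<forall>x. sm 1 x = x) \<and>
     (\<forall>i j. \<forall>a\<in>GA i. \<forall>x\<in>GL j. sm a x \<in> GL (i + j)) \<and>
     (\<forall>i. \<forall>a\<in>GA i. \<forall>x. dL (sm a x) = sm (dA a) x + ksign i (sm a (dL x)))"

definition homology_nonzero :: "(int \<Rightarrow> 'a::ab_group_add set) \<Rightarrow> ('a \<Rightarrow> 'a) \<Rightarrow> int \<Rightarrow> bool" where
  "homology_nonzero G d i \<longleftrightarrow> (\<exists>x\<in>G i. d x = 0 \<and> x \<notin> d ` G (i + 1))"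

definition hsup :: "(int \<Rightarrow> 'a::ab_group_add set) \<Rightarrow> ('a \<Rightarrow> 'a) \<Rightarrow> ereal" where
  "hsup G d = Sup ((\<lambda>i. ereal (real_of_int i)) ` {i. homology_nonzero G d i})"

definition hinf :: "(int \<Rightarrow> 'a::ab_group_add set) \<Rightarrow> ('a \<Rightarrow> 'a) \<Rightarrow> ereal" where
  "hinf G d = Inf ((\<lambda>i. ereal (real_of_int i)) ` {i. homology_nonzero G d i})"

definition hamp :: "(int \<Rightarrow> 'a::ab_group_add set) \<Rightarrow> ('a \<Rightarrow> 'a) \<Rightarrow> ereal" where
  "hamp G d = hsup G d - hinf G d"

text \<open>Semibasis: a set of homogeneous elements forming a basis of the underlying graded
module over the underlying graded algebra (the whole type 'a).\<close>
definition semibasis ::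
  "(int \<Rightarrow> 'm::ab_group_add set) \<Rightarrow> ('a::{ring, monoid_mult} \<Rightarrow> 'm \<Rightarrow> 'm) \<Rightarrow> 'm set \<Rightarrow> bool" where
  "semibasis GL sm B \<longleftrightarrow>
     (\<forall>b\<in>B. \<exists>i. b \<in> GL i) \<and>
     (\<forall>x. \<exists>c. finite {b\<in>B. c b \<noteq> 0} \<and> x = (\<Sum>b\<in>{b\<in>B. c b \<noteq> 0}. sm (c b) b)) \<and>
     (\<forall>c. finite {b\<in>B. c b \<noteq> 0} \<and> (\<Sum>b\<in>{b\<in>B. c b \<noteq> 0}. sm (c b) b) = 0 \<longrightarrow>
          (\<forall>b\<in>B. c b = 0))"

definition bounded_below :: "(int \<Rightarrow> 'm::zero set) \<Rightarrow> bool" where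
  "bounded_below G \<longleftrightarrow> (\<exists>N. \<forall>i<N. G i = {0})"

definition semifree_with_basis ::
  "(int \<Rightarrow> 'a::{ring, monoid_mult} set) \<Rightarrow> ('a \<Rightarrow> 'a) \<Rightarrow>
   (int \<Rightarrow> 'm::ab_group_add set) \<Rightarrow> ('m \<Rightarrow> 'm) \<Rightarrow> ('a \<Rightarrow> 'm \<Rightarrow> 'm) \<Rightarrow> 'm set \<Rightarrow> bool" where
  "semifree_with_basis GA dA GL dL sm B \<longleftrightarrow>
     dg_module GA dA GL dL sm \<and> bounded_below GL \<and> semibasis GL sm B"

end

theory Submission
  imports Defs
begin


lemma additive_zero: fixes f :: "'a::ab_group_add \<Rightarrow> 'b::ab_group_add" assumes "\<forall>x y. f (x + y) = f x + f y" shows "f 0 = (0::'b::ab_group_add)"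
proof -
  have "f (0 + 0) = f 0 + f 0" using assms by blast
  then show ?thesis by simp
qed

lemma additive_uminus: fixes f :: "'a::ab_group_add \<Rightarrow> 'b::ab_group_add" assumes "\<forall>x y. f (x + y) = f x + f y" shows "f (- x) = - (f x::'b::ab_group_add)"
proof -
  have "f (x + - x) = f x + f (- x)" using assms by blast
  then show ?thesis using additive_zero[OF assms] by (simp add: eq_neg_iff_add_eq_0 add.commute)
qed

lemma additive_diff: fixes f :: "'a::ab_group_add \<Rightarrow> 'b::ab_group_add" assumes "\<forall>x y. f (x + y) = f x + f y" shows "f (x - y) = f x - (f y::'b::ab_group_add)"
  using assms additive_uminus[OF assms, of y] by (metis diff_conv_add_uminus)

lemma additive_sum: fixes f :: "'a::ab_group_add \<Rightarrow> 'b::ab_group_add" assumes "\<forall>x y. f (x + y) = f x + f y"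
  shows "f (sum g S) = (\<Sum>s\<in>S. (f (g s)::'b::ab_group_add))"
proof (cases "finite S")
  case True then show ?thesis by (induction S rule: finite_induct) (use assms additive_zero[OF assms] in auto)
next
  case False then show ?thesis using additive_zero[OF assms] by simp
qed

lemma gg_decomp: assumes "graded_group G" shows "\<exists>I f. finite I \<and> (\<forall>i\<in>I. f i \<in> G i) \<and> x = sum f I"
proof -
  have "\<forall>x. \<exists>I f. finite I \<and> (\<forall>i\<in>I. f i \<in> G i) \<and> x = sum f I"
    using assms unfolding graded_group_def by (elim conjE) assumption
  then show ?thesis by (rule spec)
qed

lemma gg_zero: "graded_group G \<Longrightarrow> 0 \<in> G i" unfolding graded_group_def by blast
lemma gg_add: "graded_group G \<Longrightarrow> x \<in> G i \<Longrightarrow> y \<in> G i \<Longrightarrow> x + y \<in> G i" unfolding graded_group_def by blast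
lemma gg_uminus: "graded_group G \<Longrightarrow> x \<in> G i \<Longrightarrow> - x \<in> G i" unfolding graded_group_def by blast
lemma gg_diff: "graded_group G \<Longrightarrow> x \<in> G i \<Longrightarrow> y \<in> G i \<Longrightarrow> x - y \<in> G i"
  by (metis diff_conv_add_uminus gg_add gg_uminus)
lemma gg_sum: assumes "graded_group G" "\<forall>t\<in>T. y t \<in> G i" shows "sum y T \<in> G i"
proof (cases "finite T")
  case True then show ?thesis using assms(2) by (induction T rule: finite_induct) (auto intro: gg_add gg_zero assms(1))
next
  case False then show ?thesis using gg_zero[OF assms(1)] by simp
qed
lemma gg_ksign: "graded_group G \<Longrightarrow> x \<in> G i \<Longrightarrow> ksign k x \<in> G i"
  unfolding ksign_def by (auto intro: gg_uminus)

lemma gg_unique: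
  assumes gg: "graded_group G" and K: "finite K" "\<forall>k\<in>K. g k \<in> G k"
    and x: "x \<in> G i" "sum g K = x"
  shows "(\<forall>k\<in>K. k \<noteq> i \<longrightarrow> g k = 0) \<and> (i \<in> K \<longrightarrow> g i = x) \<and> (i \<notin> K \<longrightarrow> x = 0)"
proof -
  define f where "f k = (if k \<in> K then g k else 0) - (if k = i then x else 0)" for k
  have fG: "\<forall>k\<in>insert i K. f k \<in> G k"
    using K x gg by (auto simp: f_def intro!: gg_diff gg_zero gg_uminus)
  have "sum f (insert i K) = sum (\<lambda>k. if k \<in> K then g k else 0) (insert i K) - sum (\<lambda>k. if k = i then x else 0) (insert i K)"
    unfolding f_def by (simp add: sum_subtractf)
  also have "sum (\<lambda>k. if k \<in> K then g k else 0) (insert i K) = sum g K"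
    using K(1) by (simp add: sum.If_cases Int_absorb1 Int_absorb2 subset_insertI)
  also have "sum (\<lambda>k. if k = i then x else 0) (insert i K) = x"
    using K(1) by simp
  finally have "sum f (insert i K) = 0" using x by simp
  then have z: "\<forall>k\<in>insert i K. f k = 0" using gg fG K(1) unfolding graded_group_def by blast
  show ?thesis
  proof (intro conjI impI ballI)
    fix k assume "k \<in> K" "k \<noteq> i" then show "g k = 0" using z by (auto simp: f_def)
  next
    assume "i \<in> K" then show "g i = x" using z by (auto simp: f_def)
  next
    assume "i \<notin> K" then show "x = 0" using z by (auto simp: f_def)
  qed
qed

lemma gg_deg_unique: "graded_group G \<Longrightarrow> x \<in> G i \<Longrightarrow> x \<in> G j \<Longrightarrow> i \<noteq> j \<Longrightarrow> x = 0"
  using gg_unique[of G "{j}" "\<lambda>_. x" x i] by auto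

lemma gg_homog:
  assumes gg: "graded_group G" and T: "finite T" "\<forall>t\<in>T. y t \<in> G (e t)"
    and x: "x \<in> G i" "x = sum y T"
  shows "x = (\<Sum>t\<in>T. if e t = i then y t else 0)"
proof -
  define g where "g k = sum y {t\<in>T. e t = k}" for k
  have gG: "\<forall>k\<in>e ` T. g k \<in> G k" unfolding g_def using T by (auto intro!: gg_sum gg)
  have "sum y T = sum g (e ` T)" unfolding g_def using T(1) by (rule sum.image_gen)
  then have U: "(\<forall>k\<in>e ` T. k \<noteq> i \<longrightarrow> g k = 0) \<and> (i \<in> e ` T \<longrightarrow> g i = x) \<and> (i \<notin> e ` T \<longrightarrow> x = 0)"
    using gg_unique[OF gg _ gG x(1)] T(1) x(2) by auto
  have "(\<Sum>t\<in>T. if e t = i then y t else 0) = g i"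
    unfolding g_def using T(1) by (simp add: sum.inter_filter)
  moreover have "g i = x"
  proof (cases "i \<in> e ` T")
    case True then show ?thesis using U by blast
  next
    case False then have E: "{t\<in>T. e t = i} = {}" by auto
    have "g i = 0" unfolding g_def E by simp
    then show ?thesis using U False by simp
  qed
  ultimately show ?thesis by simp
qed



locale P32 =
  fixes GA :: "int \<Rightarrow> 'a::{ring, monoid_mult} set" and dA :: "'a \<Rightarrow> 'a"
    and GL :: "int \<Rightarrow> 'm::ab_group_add set" and dL :: "'m \<Rightarrow> 'm"
    and sm :: "'a \<Rightarrow> 'm \<Rightarrow> 'm" and B :: "'m set" and n m :: int
  assumes alg: "dg_algebra GA dA" and pos: "positively_graded GA"
    and hnz: "\<exists>i. homology_nonzero GA dA i"
    and sf: "semifree_with_basis GA dA GL dL sm B"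
    and degs: "\<forall>b\<in>B. \<exists>i. n \<le> i \<and> i \<le> n + m \<and> b \<in> GL i"
begin

lemma modl: "dg_module GA dA GL dL sm" using sf unfolding semifree_with_basis_def by blast
lemma sbasis: "semibasis GL sm B" using sf unfolding semifree_with_basis_def by blast
lemma cxA: "is_complex GA dA" using alg unfolding dg_algebra_def by blast
lemma cxL: "is_complex GL dL" using modl unfolding dg_module_def by blast
lemma ggA: "graded_group GA" using cxA unfolding is_complex_def by blast
lemma ggL: "graded_group GL" using cxL unfolding is_complex_def by blast
lemma dA_add: "\<forall>x y. dA (x + y) = dA x + dA y" using cxA unfolding is_complex_def by blast
lemma dL_add: "\<forall>x y. dL (x + y) = dL x + dL y" using cxL unfolding is_complex_def by blast
lemma dA_deg: "x \<in> GA i \<Longrightarrow> dA x \<in> GA (i - 1)" using cxA unfolding is_complex_def by blast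
lemma dL_deg: "x \<in> GL i \<Longrightarrow> dL x \<in> GL (i - 1)" using cxL unfolding is_complex_def by blast
lemma dLdL: "dL (dL x) = 0" using cxL unfolding is_complex_def by blast
lemma one_deg: "1 \<in> GA 0" using alg unfolding dg_algebra_def by blast
lemma mult_deg: "a \<in> GA i \<Longrightarrow> b \<in> GA j \<Longrightarrow> a * b \<in> GA (i + j)" using alg unfolding dg_algebra_def by blast
lemma leibA: "a \<in> GA i \<Longrightarrow> dA (a * b) = dA a * b + ksign i (a * dA b)" using alg unfolding dg_algebra_def by blast
lemma sm_add_r: "\<forall>x y. sm a (x + y) = sm a x + sm a y" using modl unfolding dg_module_def by blast
lemma sm_add_l: "\<forall>a b. sm (a + b) x = sm a x + sm b x" using modl unfolding dg_module_def by blast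
lemma sm_mult: "sm (a * b) x = sm a (sm b x)" using modl unfolding dg_module_def by blast
lemma sm_one: "sm 1 x = x" using modl unfolding dg_module_def by blast
lemma sm_deg: "a \<in> GA i \<Longrightarrow> x \<in> GL j \<Longrightarrow> sm a x \<in> GL (i + j)" using modl unfolding dg_module_def by blast
lemma leibL: "a \<in> GA i \<Longrightarrow> dL (sm a x) = sm (dA a) x + ksign i (sm a (dL x))" using modl unfolding dg_module_def by blast

lemma dA0: "dA 0 = 0" using additive_zero[OF dA_add] .
lemma dL0: "dL 0 = 0" using additive_zero[OF dL_add] .
lemma sm0l: "sm 0 x = 0" using additive_zero[of "\<lambda>a. sm a x"] sm_add_l by blast
lemma sm0r: "sm a 0 = 0" using additive_zero[OF sm_add_r] .
lemma sm_neg_l: "sm (- a) x = - sm a x" using additive_uminus[of "\<lambda>a. sm a x"] sm_add_l by blast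
lemma sm_sum_l: "sm (sum g K) x = (\<Sum>k\<in>K. sm (g k) x)" using additive_sum[of "\<lambda>a. sm a x"] sm_add_l by blast
lemma sm_sum_r: "sm a (sum g K) = (\<Sum>k\<in>K. sm a (g k))" using additive_sum[OF sm_add_r] .
lemma dL_sum: "dL (sum g K) = (\<Sum>k\<in>K. dL (g k))" using additive_sum[OF dL_add] .
lemma dL_diff: "dL (x - y) = dL x - dL y" using additive_diff[OF dL_add] .
lemma sm_ksign: "sm a (ksign k x) = ksign k (sm a x)"
  unfolding ksign_def using additive_uminus[OF sm_add_r] by simp

definition deg :: "'m \<Rightarrow> int" where "deg b = (SOME i. n \<le> i \<and> i \<le> n + m \<and> b \<in> GL i)"

lemma deg: "b \<in> B \<Longrightarrow> n \<le> deg b \<and> deg b \<le> n + m \<and> b \<in> GL (deg b)"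
  unfolding deg_def using degs someI_ex[of "\<lambda>i. n \<le> i \<and> i \<le> n + m \<and> b \<in> GL i"] by blast

lemma one_nz: "(1::'a) \<noteq> 0"
proof
  assume 1: "(1::'a) = 0"
  obtain i x where "x \<in> GA i" "x \<notin> dA ` GA (i + 1)" using hnz unfolding homology_nonzero_def by blast
  moreover have "x = x * 1" by simp
  then have "x = 0" using 1 by simp
  moreover have "0 \<in> dA ` GA (i + 1)" using dA0 gg_zero[OF ggA] by (metis image_eqI)
  ultimately show False by simp
qed

lemma zero_notin_B: "0 \<notin> B"
proof
  assume B0: "0 \<in> B"
  define c where "c b = (if b = 0 then (1::'a) else 0)" for b :: 'm
  have S: "{b\<in>B. c b \<noteq> 0} = {0}" using B0 one_nz by (auto simp: c_def)
  have "(\<Sum>b\<in>{b\<in>B. c b \<noteq> 0}. sm (c b) b) = 0" unfolding S by (simp add: sm0r)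
  moreover have "finite {b\<in>B. c b \<noteq> 0}" unfolding S by simp
  ultimately have "\<forall>b\<in>B. c b = 0" using sbasis unfolding semibasis_def by blast
  then show False using B0 one_nz by (auto simp: c_def)
qed

lemma deg_unique: "b \<in> B \<Longrightarrow> b \<in> GL k \<Longrightarrow> k = deg b"
  using gg_deg_unique[OF ggL, of b k "deg b"] deg zero_notin_B by blast

lemma indep:
  assumes F: "finite F" "F \<subseteq> B" and s: "(\<Sum>b\<in>F. sm (c b) b) = 0"
  shows "\<forall>b\<in>F. c b = 0"
proof -
  define c' where "c' b = (if b \<in> F then c b else 0)" for b
  have sub: "{b\<in>B. c' b \<noteq> 0} \<subseteq> F" by (auto simp: c'_def)
  have fin: "finite {b\<in>B. c' b \<noteq> 0}" using sub F(1) finite_subset by blast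
  have "(\<Sum>b\<in>{b\<in>B. c' b \<noteq> 0}. sm (c' b) b) = (\<Sum>b\<in>F. sm (c' b) b)"
    by (rule sum.mono_neutral_left[OF F(1) sub]) (use F(2) in \<open>auto simp: sm0l\<close>)
  also have "\<dots> = 0" using s by (simp add: c'_def)
  finally have z: "\<forall>b\<in>B. c' b = 0" using sbasis fin unfolding semibasis_def by blast
  show ?thesis
  proof
    fix b assume b: "b \<in> F"
    then have "c' b = 0" using z F(2) by blast
    then show "c b = 0" using b by (simp add: c'_def)
  qed
qed

lemma span_all: "\<exists>F c. finite F \<and> F \<subseteq> B \<and> x = (\<Sum>b\<in>F. sm (c b) b)"
proof -
  obtain c where "finite {b\<in>B. c b \<noteq> 0}" "x = (\<Sum>b\<in>{b\<in>B. c b \<noteq> 0}. sm (c b) b)"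
    using sbasis unfolding semibasis_def by blast
  then show ?thesis by (intro exI[of _ "{b\<in>B. c b \<noteq> 0}"] exI[of _ c]) auto
qed

lemma hexp:
  assumes F: "finite F" "F \<subseteq> B" and x: "x \<in> GL i" "x = (\<Sum>b\<in>F. sm (c b) b)"
  shows "\<exists>c'. (\<forall>b\<in>F. c' b \<in> GA (i - deg b)) \<and> x = (\<Sum>b\<in>F. sm (c' b) b)"
proof -
  have "\<exists>p. finite (fst p) \<and> (\<forall>k\<in>fst p. snd p k \<in> GA k) \<and> a = sum (snd p) (fst p)" for a
  proof -
    obtain I f where "finite I" "\<forall>i\<in>I. f i \<in> GA i" "a = sum f I"
      using gg_decomp[OF ggA, of a] by blast
    then show ?thesis by (intro exI[of _ "(I, f)"]) simp
  qed
  then have ex: "\<forall>a. \<exists>p. finite (fst p) \<and> (\<forall>k\<in>fst p. snd p k \<in> GA k) \<and> a = sum (snd p) (fst p)" by blast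
  obtain Q where Q: "\<forall>a. finite (fst (Q a)) \<and> (\<forall>k\<in>fst (Q a). snd (Q a) k \<in> GA k) \<and> a = sum (snd (Q a)) (fst (Q a))"
    using choice[OF ex] ..
  define I where "I a = fst (Q a)" for a
  define f where "f a = snd (Q a)" for a
  have I: "finite (I a)" "\<forall>k\<in>I a. f a k \<in> GA k" "a = sum (f a) (I a)" for a
    using Q unfolding I_def f_def by blast+
  define T where "T = Sigma F (\<lambda>b. I (c b))"
  have T: "finite T" using F(1) I(1) by (simp add: T_def)
  have "x = (\<Sum>b\<in>F. \<Sum>k\<in>I (c b). sm (f (c b) k) b)"
    unfolding x(2)
  proof (rule sum.cong)
    fix b show "sm (c b) b = (\<Sum>k\<in>I (c b). sm (f (c b) k) b)"
      by (rule trans[OF arg_cong[of _ _ "\<lambda>a. sm a b", OF I(3)] sm_sum_l])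
  qed simp
  also have "\<dots> = (\<Sum>(b,k)\<in>T. sm (f (c b) k) b)"
    unfolding T_def by (rule sum.Sigma) (use F I(1) in auto)
  finally have xT: "x = (\<Sum>t\<in>T. (\<lambda>(b,k). sm (f (c b) k) b) t)" .
  have yG: "\<forall>t\<in>T. (\<lambda>(b,k). sm (f (c b) k) b) t \<in> GL ((\<lambda>(b,k). k + deg b) t)"
    unfolding T_def using I(2) deg F(2) by (auto intro!: sm_deg)
  have "x = (\<Sum>t\<in>T. if (\<lambda>(b,k). k + deg b) t = i then (\<lambda>(b,k). sm (f (c b) k) b) t else 0)"
    by (rule gg_homog[OF ggL T yG x(1) xT])
  also have "\<dots> = (\<Sum>(b,k)\<in>T. if k = i - deg b then sm (f (c b) k) b else 0)"
    by (rule sum.cong) auto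
  also have "\<dots> = (\<Sum>b\<in>F. \<Sum>k\<in>I (c b). if k = i - deg b then sm (f (c b) k) b else 0)"
    unfolding T_def by (rule sum.Sigma[symmetric]) (use F I(1) in auto)
  also have "\<dots> = (\<Sum>b\<in>F. sm (if i - deg b \<in> I (c b) then f (c b) (i - deg b) else 0) b)"
    by (rule sum.cong) (use I(1) in \<open>auto simp: sm0l\<close>)
  finally show ?thesis using I(2) gg_zero[OF ggA] by (intro exI[of _ "\<lambda>b. if i - deg b \<in> I (c b) then f (c b) (i - deg b) else 0"]) auto
qed

lemma GA_neg: "k < 0 \<Longrightarrow> a \<in> GA k \<Longrightarrow> a = 0" using pos unfolding positively_graded_def by blast

lemma L_low: assumes "x \<in> GL i" "i < n" shows "x = 0"
proof -
  obtain F c where F: "finite F" "F \<subseteq> B" "x = (\<Sum>b\<in>F. sm (c b) b)" using span_all by blast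
  obtain c' where c': "\<forall>b\<in>F. c' b \<in> GA (i - deg b)" "x = (\<Sum>b\<in>F. sm (c' b) b)" using hexp[OF F(1,2) assms(1) F(3)] by blast
  have "\<forall>b\<in>F. c' b = 0" using c'(1) deg F(2) assms(2) GA_neg by (metis diff_less_0_iff_less order_less_le_trans subsetD)
  then show ?thesis using c'(2) by (simp add: sm0l)
qed


definition Lspan :: "int \<Rightarrow> 'm \<Rightarrow> bool" where
  "Lspan j x \<longleftrightarrow> (\<exists>F c. finite F \<and> F \<subseteq> B \<and> (\<forall>b\<in>F. deg b \<le> j) \<and> x = (\<Sum>b\<in>F. sm (c b) b))"

lemma ext_sum: assumes "finite G" "F \<subseteq> G"
  shows "(\<Sum>b\<in>F. sm (c b) b) = (\<Sum>b\<in>G. sm (if b \<in> F then c b else 0) b)"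
proof -
  have "(\<Sum>b\<in>G. sm (if b \<in> F then c b else 0) b) = (\<Sum>b\<in>G. if b \<in> F then sm (c b) b else 0)"
    by (rule sum.cong) (auto simp: sm0l)
  also have "\<dots> = (\<Sum>b\<in>G \<inter> F. sm (c b) b)" using assms(1) by (simp add: sum.inter_restrict)
  also have "G \<inter> F = F" using assms(2) by blast
  finally show ?thesis by simp
qed

lemma Lspan_zero: "Lspan j 0" unfolding Lspan_def by (intro exI[of _ "{}"]) auto

lemma Lspan_add: assumes "Lspan j x" "Lspan j y" shows "Lspan j (x + y)"
proof -
  obtain F c where F: "finite F" "F \<subseteq> B" "\<forall>b\<in>F. deg b \<le> j" "x = (\<Sum>b\<in>F. sm (c b) b)" using assms(1) unfolding Lspan_def by blast
  obtain G d where G: "finite G" "G \<subseteq> B" "\<forall>b\<in>G. deg b \<le> j" "y = (\<Sum>b\<in>G. sm (d b) b)" using assms(2) unfolding Lspan_def by blast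
  have "x + y = (\<Sum>b\<in>F \<union> G. sm (if b \<in> F then c b else 0) b) + (\<Sum>b\<in>F \<union> G. sm (if b \<in> G then d b else 0) b)"
    using F G ext_sum[of "F \<union> G" F c] ext_sum[of "F \<union> G" G d] by simp
  also have "\<dots> = (\<Sum>b\<in>F \<union> G. sm ((if b \<in> F then c b else 0) + (if b \<in> G then d b else 0)) b)"
    by (simp add: sum.distrib sm_add_l)
  finally show ?thesis unfolding Lspan_def using F G
    by (intro exI[of _ "F \<union> G"] exI[of _ "\<lambda>b. (if b \<in> F then c b else 0) + (if b \<in> G then d b else 0)"]) auto
qed

lemma Lspan_uminus: assumes "Lspan j x" shows "Lspan j (- x)"
proof -
  obtain F c where F: "finite F" "F \<subseteq> B" "\<forall>b\<in>F. deg b \<le> j" "x = (\<Sum>b\<in>F. sm (c b) b)" using assms(1) unfolding Lspan_def by blast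
  have "- x = (\<Sum>b\<in>F. sm (- c b) b)" using F(4) by (simp add: sm_neg_l sum_negf)
  then show ?thesis unfolding Lspan_def using F by (intro exI[of _ F] exI[of _ "\<lambda>b. - c b"]) auto
qed

lemma Lspan_diff: "Lspan j x \<Longrightarrow> Lspan j y \<Longrightarrow> Lspan j (x - y)"
  using Lspan_add Lspan_uminus by (metis diff_conv_add_uminus)

lemma Lspan_ksign: "Lspan j x \<Longrightarrow> Lspan j (ksign k x)"
  unfolding ksign_def using Lspan_uminus by simp

lemma Lspan_sum: assumes "\<forall>t\<in>T. Lspan j (g t)" shows "Lspan j (sum g T)"
proof (cases "finite T")
  case True then show ?thesis using assms by (induction T rule: finite_induct) (auto intro: Lspan_zero Lspan_add)
next
  case False then show ?thesis by (simp add: Lspan_zero)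
qed

lemma Lspan_mono: "j \<le> j' \<Longrightarrow> Lspan j x \<Longrightarrow> Lspan j' x"
  unfolding Lspan_def by (elim exE conjE, intro exI conjI) (auto intro: order_trans)

lemma Lspan_sm: assumes "Lspan j x" shows "Lspan j (sm a x)"
proof -
  obtain F c where F: "finite F" "F \<subseteq> B" "\<forall>b\<in>F. deg b \<le> j" "x = (\<Sum>b\<in>F. sm (c b) b)" using assms(1) unfolding Lspan_def by blast
  have "sm a x = (\<Sum>b\<in>F. sm (a * c b) b)" using F(4) by (simp add: sm_sum_r sm_mult)
  then show ?thesis unfolding Lspan_def using F by (intro exI[of _ F] exI[of _ "\<lambda>b. a * c b"]) auto
qed

lemma Lspan_basis: "b \<in> B \<Longrightarrow> Lspan (deg b) b"
  unfolding Lspan_def by (intro exI[of _ "{b}"] exI[of _ "\<lambda>_. 1"]) (auto simp: sm_one)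

lemma dL_basis: assumes b: "b \<in> B" shows "Lspan (deg b - 1) (dL b)"
proof -
  have x: "dL b \<in> GL (deg b - 1)" using deg[OF b] dL_deg by blast
  obtain F c where F: "finite F" "F \<subseteq> B" "dL b = (\<Sum>b\<in>F. sm (c b) b)" using span_all by blast
  obtain c' where c': "\<forall>b'\<in>F. c' b' \<in> GA (deg b - 1 - deg b')" "dL b = (\<Sum>b'\<in>F. sm (c' b') b')"
    using hexp[OF F(1,2) x F(3)] by blast
  define F' where "F' = {b'\<in>F. deg b' \<le> deg b - 1}"
  have "(\<Sum>b'\<in>F'. sm (c' b') b') = (\<Sum>b'\<in>F. sm (c' b') b')"
  proof (rule sum.mono_neutral_left[OF F(1)])
    show "F' \<subseteq> F" by (auto simp: F'_def)
    show "\<forall>i\<in>F - F'. sm (c' i) i = 0"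
    proof
      fix b' assume "b' \<in> F - F'"
      then have "deg b - 1 - deg b' < 0" "c' b' \<in> GA (deg b - 1 - deg b')" using c'(1) by (auto simp: F'_def)
      then show "sm (c' b') b' = 0" using GA_neg sm0l by metis
    qed
  qed
  then show ?thesis unfolding Lspan_def using F c'(2)
    by (intro exI[of _ F'] exI[of _ c']) (auto simp: F'_def)
qed

lemma Lspan_dL_h:
  assumes F: "finite F" "F \<subseteq> B" "\<forall>b\<in>F. deg b \<le> j" "\<forall>b\<in>F. c b \<in> GA (k b)"
  shows "Lspan j (dL (\<Sum>b\<in>F. sm (c b) b))"
  unfolding dL_sum
proof (rule Lspan_sum, rule ballI)
  fix b assume b: "b \<in> F"
  have bB: "b \<in> B" using b F(2) by blast
  have "dL (sm (c b) b) = sm (dA (c b)) b + ksign (k b) (sm (c b) (dL b))"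
    using leibL F(4) b by blast
  moreover have "Lspan j (sm (dA (c b)) b)"
    using Lspan_sm[OF Lspan_mono[OF _ Lspan_basis[OF bB]]] F(3) b by blast
  moreover have "Lspan j (ksign (k b) (sm (c b) (dL b)))"
    using Lspan_ksign[OF Lspan_sm[OF Lspan_mono[OF _ dL_basis[OF bB]]]] F(3) b by force
  ultimately show "Lspan j (dL (sm (c b) b))" using Lspan_add by simp
qed


definition acyc :: "int \<Rightarrow> bool" where
  "acyc k0 \<longleftrightarrow> (\<forall>k\<ge>k0. \<forall>a\<in>GA k. dA a = 0 \<longrightarrow> a \<in> dA ` GA (k + 1))"

lemma main_step:
  assumes IH: "\<And>i z. acyc (i - (j - 1)) \<Longrightarrow> z \<in> GL i \<Longrightarrow> Lspan (j - 1) z \<Longrightarrow> dL z = 0 \<Longrightarrow> \<exists>y\<in>GL (i + 1). dL y = z"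
    and ac: "acyc (i - j)" and z: "z \<in> GL i" "Lspan j z" "dL z = 0"
  shows "\<exists>y\<in>GL (i + 1). dL y = z"
proof -
  obtain F c where F: "finite F" "F \<subseteq> B" "\<forall>b\<in>F. deg b \<le> j" "z = (\<Sum>b\<in>F. sm (c b) b)"
    using z(2) unfolding Lspan_def by blast
  obtain c' where c': "\<forall>b\<in>F. c' b \<in> GA (i - deg b)" "z = (\<Sum>b\<in>F. sm (c' b) b)"
    using hexp[OF F(1,2) z(1) F(4)] by blast
  define Fj where "Fj = {b\<in>F. deg b = j}"
  define Fl where "Fl = {b\<in>F. deg b \<noteq> j}"
  have FU: "F = Fj \<union> Fl" "Fj \<inter> Fl = {}" "finite Fj" "finite Fl" using F(1) by (auto simp: Fj_def Fl_def)
  have FjB: "Fj \<subseteq> B" "Fl \<subseteq> B" using F(2) by (auto simp: Fj_def Fl_def)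
  have Fldeg: "\<forall>b\<in>Fl. deg b \<le> j - 1" using F(3) by (auto simp: Fj_def Fl_def)
  have cj: "\<forall>b\<in>Fj. c' b \<in> GA (i - j)" using c'(1) by (auto simp: Fj_def)
  define w where "w = (\<Sum>b\<in>Fl. sm (c' b) b)"
  have zs: "z = (\<Sum>b\<in>Fj. sm (c' b) b) + w"
    unfolding c'(2) w_def FU(1) by (rule sum.union_disjoint) (use FU in auto)
  have w: "Lspan (j - 1) w" unfolding Lspan_def w_def using FU FjB Fldeg by blast
  have dw: "Lspan (j - 1) (dL w)" unfolding w_def
    by (rule Lspan_dL_h[OF FU(4) FjB(2) Fldeg, of _ "\<lambda>b. i - deg b"]) (use c'(1) FU in auto)
  define R where "R = (\<Sum>b\<in>Fj. ksign (i - j) (sm (c' b) (dL b))) + dL w"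
  have R: "Lspan (j - 1) R" unfolding R_def
  proof (rule Lspan_add[OF Lspan_sum dw], rule ballI)
    fix b assume b: "b \<in> Fj"
    then have "b \<in> B" "deg b = j" using FjB by (auto simp: Fj_def)
    then show "Lspan (j - 1) (ksign (i - j) (sm (c' b) (dL b)))"
      using Lspan_ksign Lspan_sm dL_basis by metis
  qed
  have "dL z = (\<Sum>b\<in>Fj. dL (sm (c' b) b)) + dL w" unfolding zs using dL_add dL_sum by simp
  also have "(\<Sum>b\<in>Fj. dL (sm (c' b) b)) = (\<Sum>b\<in>Fj. sm (dA (c' b)) b + ksign (i - j) (sm (c' b) (dL b)))"
    by (rule sum.cong) (use cj leibL in auto)
  finally have "dL z = (\<Sum>b\<in>Fj. sm (dA (c' b)) b) + R" unfolding R_def by (simp add: sum.distrib add.assoc)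
  then have eq0: "(\<Sum>b\<in>Fj. sm (dA (c' b)) b) + R = 0" using z(3) by simp
  obtain G d where G: "finite G" "G \<subseteq> B" "\<forall>b\<in>G. deg b \<le> j - 1" "R = (\<Sum>b\<in>G. sm (d b) b)"
    using R unfolding Lspan_def by blast
  have disj: "Fj \<inter> G = {}" using G(3) by (auto simp: Fj_def)
  define h where "h b = (if b \<in> Fj then dA (c' b) else d b)" for b
  have "(\<Sum>b\<in>Fj \<union> G. sm (h b) b) = (\<Sum>b\<in>Fj. sm (h b) b) + (\<Sum>b\<in>G. sm (h b) b)"
    by (rule sum.union_disjoint) (use FU(3) G(1) disj in auto)
  also have "(\<Sum>b\<in>Fj. sm (h b) b) = (\<Sum>b\<in>Fj. sm (dA (c' b)) b)" by (rule sum.cong) (auto simp: h_def)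
  also have "(\<Sum>b\<in>G. sm (h b) b) = (\<Sum>b\<in>G. sm (d b) b)" by (rule sum.cong) (use disj in \<open>auto simp: h_def\<close>)
  finally have "(\<Sum>b\<in>Fj \<union> G. sm (h b) b) = 0" using eq0 G(4) by simp
  then have "\<forall>b\<in>Fj \<union> G. h b = 0" using indep[of "Fj \<union> G" h] FU(3) G(1,2) FjB(1) by blast
  then have cyc: "\<forall>b\<in>Fj. dA (c' b) = 0"
  proof (intro ballI)
    fix b assume hz: "\<forall>b\<in>Fj \<union> G. h b = 0" and b: "b \<in> Fj"
    then have "h b = 0" by blast
    then show "dA (c' b) = 0" using b by (simp add: h_def)
  qed
  have "\<forall>b\<in>Fj. \<exists>e. e \<in> GA (i - j + 1) \<and> dA e = c' b"
  proof
    fix b assume b: "b \<in> Fj"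
    then have "c' b \<in> dA ` GA (i - j + 1)" using ac cj cyc unfolding acyc_def by blast
    then show "\<exists>e. e \<in> GA (i - j + 1) \<and> dA e = c' b" by auto
  qed
  then obtain e where e: "\<forall>b\<in>Fj. e b \<in> GA (i - j + 1) \<and> dA (e b) = c' b" by (metis bchoice)
  define u where "u = (\<Sum>b\<in>Fj. sm (e b) b)"
  have u: "u \<in> GL (i + 1)" unfolding u_def
  proof (rule gg_sum[OF ggL], rule ballI)
    fix b assume b: "b \<in> Fj"
    then have "b \<in> GL j" using deg FjB by (auto simp: Fj_def)
    then have "sm (e b) b \<in> GL (i - j + 1 + j)" using sm_deg e b by blast
    then show "sm (e b) b \<in> GL (i + 1)" by simp
  qed
  define Q where "Q = (\<Sum>b\<in>Fj. ksign (i - j + 1) (sm (e b) (dL b)))"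
  have "dL u = (\<Sum>b\<in>Fj. sm (dA (e b)) b + ksign (i - j + 1) (sm (e b) (dL b)))"
    unfolding u_def dL_sum by (rule sum.cong) (use e leibL in auto)
  also have "\<dots> = (\<Sum>b\<in>Fj. sm (c' b) b) + Q" unfolding Q_def using e by (simp add: sum.distrib)
  finally have du: "dL u = (\<Sum>b\<in>Fj. sm (c' b) b) + Q" .
  have z'eq: "z - dL u = w - Q" using zs du by simp
  have Q: "Lspan (j - 1) Q" unfolding Q_def
  proof (rule Lspan_sum, rule ballI)
    fix b assume b: "b \<in> Fj"
    then have "b \<in> B" "deg b = j" using FjB by (auto simp: Fj_def)
    then show "Lspan (j - 1) (ksign (i - j + 1) (sm (e b) (dL b)))"
      using Lspan_ksign Lspan_sm dL_basis by metis
  qed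
  have z'1: "Lspan (j - 1) (z - dL u)" unfolding z'eq using Lspan_diff w Q by blast
  have z'2: "z - dL u \<in> GL i" using gg_diff[OF ggL z(1)] dL_deg[OF u] by simp
  have z'3: "dL (z - dL u) = 0" using dL_diff dLdL z(3) by simp
  have ac': "acyc (i - (j - 1))" using ac unfolding acyc_def by auto
  obtain y' where y': "y' \<in> GL (i + 1)" "dL y' = z - dL u" using IH[OF ac' z'2 z'1 z'3] by blast
  have "y' + u \<in> GL (i + 1)" using gg_add[OF ggL y'(1) u] .
  moreover have "dL (y' + u) = z" using dL_add y'(2) by simp
  ultimately show ?thesis by blast
qed

lemma main_ind:
  "acyc (i - (n - 1 + int t)) \<Longrightarrow> z \<in> GL i \<Longrightarrow> Lspan (n - 1 + int t) z \<Longrightarrow> dL z = 0 \<Longrightarrow> \<exists>y\<in>GL (i + 1). dL y = z"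
proof (induction t arbitrary: i z)
  case 0
  then obtain F c where F: "finite F" "F \<subseteq> B" "\<forall>b\<in>F. deg b \<le> n - 1" "z = (\<Sum>b\<in>F. sm (c b) b)"
    unfolding Lspan_def by auto
  have "F = {}" using F(2,3) deg by fastforce
  then have "z = 0" using F(4) by simp
  then show ?case using dL0 gg_zero[OF ggL] by blast
next
  case (Suc t)
  have j: "n - 1 + int (Suc t) = (n + int t)" by simp
  have j2: "n + int t - 1 = n - 1 + int t" by simp
  show ?case
  proof (rule main_step[of "n + int t"])
    fix i' z' assume "acyc (i' - (n + int t - 1))" "z' \<in> GL i'" "Lspan (n + int t - 1) z'" "dL z' = 0"
    then show "\<exists>y\<in>GL (i' + 1). dL y = z'" using Suc.IH[of i' z'] unfolding j2 by blast
  qed (use Suc.prems[unfolded j] in auto)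
qed


lemma dA1: "dA 1 = 0"
proof -
  have "dA (1 * 1) = dA 1 * 1 + ksign 0 (1 * dA 1)" using leibA[OF one_deg] .
  then have "dA 1 = dA 1 + dA 1" by (simp add: ksign_def)
  then show ?thesis by simp
qed

lemma H0: "homology_nonzero GA dA 0"
proof (rule ccontr)
  assume "\<not> homology_nonzero GA dA 0"
  then have "1 \<in> dA ` GA (0 + 1)" using one_deg dA1 unfolding homology_nonzero_def by blast
  then have "1 \<in> dA ` GA 1" by simp
  then obtain e where e: "e \<in> GA 1" "dA e = 1" by (auto elim!: imageE)
  have "\<not> homology_nonzero GA dA i" for i
  proof -
    have "x \<in> dA ` GA (i + 1)" if x: "x \<in> GA i" "dA x = 0" for x
    proof -
      have "dA (e * x) = dA e * x + ksign 1 (e * dA x)" using leibA[OF e(1)] .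
      then have "dA (e * x) = x" using e(2) x(2) by (simp add: ksign_def)
      moreover have "e * x \<in> GA (i + 1)" using mult_deg[OF e(1) x(1)] by (simp add: add.commute)
      ultimately show ?thesis by (metis image_eqI)
    qed
    then show ?thesis unfolding homology_nonzero_def by blast
  qed
  then show False using hnz by blast
qed

lemma A_neg: "i < 0 \<Longrightarrow> \<not> homology_nonzero GA dA i"
  unfolding homology_nonzero_def using GA_neg dA0 gg_zero[OF ggA] by (metis image_eqI)

lemma hinfA: "hinf GA dA = 0"
proof (rule antisym)
  show "hinf GA dA \<le> 0" unfolding hinf_def using H0 by (intro Inf_lower) force
  show "0 \<le> hinf GA dA" unfolding hinf_def
  proof (rule Inf_greatest)
    fix x assume "x \<in> (\<lambda>i. ereal (real_of_int i)) ` {i. homology_nonzero GA dA i}"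
    then obtain i where "x = ereal (real_of_int i)" "homology_nonzero GA dA i" by blast
    then show "0 \<le> x" using A_neg by (metis ereal_less_eq(5) not_le of_int_0_le_iff)
  qed
qed

lemma A_bound: "homology_nonzero GA dA k \<Longrightarrow> ereal (real_of_int k) \<le> hamp GA dA"
  unfolding hamp_def hinfA hsup_def by (simp add: Sup_upper)

lemma acyc_of: assumes "hamp GA dA < ereal (real_of_int k0)" shows "acyc k0"
  unfolding acyc_def
proof (intro allI impI ballI)
  fix k a assume k: "k0 \<le> k" and a: "a \<in> GA k" "dA a = 0"
  have "ereal (real_of_int k0) \<le> ereal (real_of_int k)" using k by simp
  then have "\<not> homology_nonzero GA dA k" using A_bound assms by (meson leD order_less_le_trans)
  then show "a \<in> dA ` GA (k + 1)" using a unfolding homology_nonzero_def by blast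
qed

lemma L_inf: "homology_nonzero GL dL i \<Longrightarrow> n \<le> i"
  unfolding homology_nonzero_def using L_low dL0 gg_zero[OF ggL] by (metis image_eqI not_le)

lemma L_sup: assumes m: "m \<ge> 0" and s: "hamp GA dA < \<infinity>" and h: "homology_nonzero GL dL i"
  shows "ereal (real_of_int i) \<le> hamp GA dA + ereal (real_of_int (n + m))"
proof (rule ccontr)
  assume "\<not> ?thesis"
  then have lt: "hamp GA dA + ereal (real_of_int (n + m)) < ereal (real_of_int i)" by simp
  have "hamp GA dA < ereal (real_of_int (i - (n + m)))"
    using lt s by (cases "hamp GA dA") auto
  then have ac: "acyc (i - (n - 1 + int (nat (m + 1))))" using acyc_of m by simp
  obtain x where x: "x \<in> GL i" "dL x = 0" "x \<notin> dL ` GL (i + 1)" using h unfolding homology_nonzero_def by blast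
  obtain F c where F: "finite F" "F \<subseteq> B" "x = (\<Sum>b\<in>F. sm (c b) b)" using span_all by blast
  have "Lspan (n + m) x" unfolding Lspan_def using F deg by blast
  then have "Lspan (n - 1 + int (nat (m + 1))) x" using m by simp
  then obtain y where "y \<in> GL (i + 1)" "dL y = x" using main_ind[OF ac x(1) _ x(2)] by blast
  then show False using x(3) by blast
qed

end

theorem proposition3p2:
  fixes GA :: "int \<Rightarrow> 'a::{ring, monoid_mult} set" and dA :: "'a \<Rightarrow> 'a"
    and GL :: "int \<Rightarrow> 'm::ab_group_add set" and dL :: "'m \<Rightarrow> 'm"
    and sm :: "'a \<Rightarrow> 'm \<Rightarrow> 'm" and B :: "'m set"
    and s :: ereal and n m :: int
  assumes "dg_algebra GA dA" and "positively_graded GA"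
    and "\<exists>i. homology_nonzero GA dA i"
    and "s = hamp GA dA" and "s < \<infinity>"
    and "semifree_with_basis GA dA GL dL sm B"
    and "\<exists>x::'m. x \<noteq> 0"
    and "m \<ge> 0"
    and "\<forall>b\<in>B. \<exists>i. n \<le> i \<and> i \<le> n + m \<and> b \<in> GL i"
  shows "hinf GL dL \<ge> ereal (real_of_int n) \<and>
    hsup GL dL \<le> s + ereal (real_of_int (n + m)) \<and>
    hamp GL dL \<le> s + ereal (real_of_int m)"
proof -
  interpret P: P32 GA dA GL dL sm B n m
    using assms(1,2,3,6,9) by unfold_locales
  have inf: "ereal (real_of_int n) \<le> hinf GL dL" unfolding hinf_def
  proof (rule Inf_greatest)
    fix x assume "x \<in> (\<lambda>i. ereal (real_of_int i)) ` {i. homology_nonzero GL dL i}"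
    then obtain i where "x = ereal (real_of_int i)" "homology_nonzero GL dL i" by blast
    then show "ereal (real_of_int n) \<le> x" using P.L_inf by simp
  qed
  have sup: "hsup GL dL \<le> s + ereal (real_of_int (n + m))" unfolding hsup_def
  proof (rule Sup_least)
    fix x assume "x \<in> (\<lambda>i. ereal (real_of_int i)) ` {i. homology_nonzero GL dL i}"
    then obtain i where "x = ereal (real_of_int i)" "homology_nonzero GL dL i" by blast
    then show "x \<le> s + ereal (real_of_int (n + m))" using P.L_sup assms(4,5,8) by simp
  qed
  have amp: "hamp GL dL \<le> s + ereal (real_of_int m)"
  proof (cases "{i. homology_nonzero GL dL i} = {}")
    case True
    then have "hsup GL dL = -\<infinity>" unfolding hsup_def True by (simp add: bot_ereal_def)
    moreover have "hinf GL dL = \<infinity>" unfolding hinf_def True by (simp add: top_ereal_def)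
    ultimately show ?thesis unfolding hamp_def by simp
  next
    case False
    then obtain i0 where "homology_nonzero GL dL i0" by blast
    then have "hinf GL dL \<le> ereal (real_of_int i0)" unfolding hinf_def by (intro Inf_lower) blast
    then obtain r where r: "hinf GL dL = ereal r" "real_of_int n \<le> r"
      using inf by (cases "hinf GL dL") auto
    show ?thesis unfolding hamp_def r(1)
      using sup r(2) assms(5) by (cases s; cases "hsup GL dL") auto
  qed
  show ?thesis using inf sup amp by blast
qed

end
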